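(* Under the standing assumptions, there is a constant $C>0$ such that for all integers $n\ge1$, all $\delta\in(0,1)$ and all $j\in\{1,\dots,d^n\}$, $$N_\delta\big(S_{n,j}(E)\big)\le C\,N_{\delta/|S'_{n,j}(E)|}(E).$$
   Context: Standing assumptions: $T$ is a rational map of degree $d\ge2$ whose Julia set $J$ is a bounded subset of $\mathbb{C}$, $J\ne\mathbb{C}_\infty$; $E\subseteq\mathbb{C}$ is non-empty and compact; $U\subseteq\mathbb{C}$ is a simply connected open set with $E\subseteq U$, $U\cap P(T)=\emptyset$, $U\cap J\ne\emptyset$, where $P(T)=\overline{\bigcup_{n\ge1}T^n(\mathrm{Crit}(T))}$ is the post-critical set; the orbital set $\bigcup_{k\ge0}T^{-k}(E)$ is bounded in $\mathbb{C}$. Since $U$ contains no critical values of $T^n$, for each $n\ge1$ there are $d^n$ univalent analytic inverse branches $S_{n,1},\dots,S_{n,d^n}$ of $T^{-n}$ defined on all of $U$ (so $T^n\circ S_{n,j}=\mathrm{id}_U$ and $S_{n,1}(w),\dots,S_{n,d^n}(w)$ are the $d^n$ distinct points of $T^{-n}(w)$); $S_{0,1}$ is the identity. Write $|S'_{n,j}(E)|:=\max_{z\in E}|S'_{n,j}(z)|$. $N_\delta(A)$ is the minimal number of open sets of diameter at most $\delta$ needed to cover $A$. *)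

theory Defs
  imports "HOL-Complex_Analysis.Complex_Analysis" "HOL-Computational_Algebra.Polynomial"
begin

text \<open>The Riemann sphere is modelled as complex option, None being the point at infinity.\<close>

type_synonym sphere = "complex option"

fun chordal :: "sphere \<Rightarrow> sphere \<Rightarrow> real" where
  "chordal (Some z) (Some w) =
     2 * cmod (z - w) / (sqrt (1 + (cmod z)\<^sup>2) * sqrt (1 + (cmod w)\<^sup>2))"
| "chordal (Some z) None = 2 / sqrt (1 + (cmod z)\<^sup>2)"
| "chordal None (Some w) = 2 / sqrt (1 + (cmod w)\<^sup>2)"
| "chordal None None = 0"

definition sball :: "sphere \<Rightarrow> real \<Rightarrow> sphere set" where
  "sball a r = {b. chordal a b < r}"

definition sclosure :: "sphere set \<Rightarrow> sphere set" where
  "sclosure A = {x. \<forall>r>0. \<exists>y\<in>A. chordal x y < r}"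

definition rat_eval :: "complex poly \<Rightarrow> complex poly \<Rightarrow> sphere \<Rightarrow> sphere" where
  "rat_eval p q x = (case x of
      Some z \<Rightarrow> (if poly q z \<noteq> 0 then Some (poly p z / poly q z) else None)
    | None \<Rightarrow> (if degree p > degree q then None
              else if degree p < degree q then Some 0
              else Some (lead_coeff p / lead_coeff q)))"

definition rational_map_of_degree :: "(sphere \<Rightarrow> sphere) \<Rightarrow> nat \<Rightarrow> bool" where
  "rational_map_of_degree T d \<longleftrightarrow>
     (\<exists>p q. coprime p q \<and> max (degree p) (degree q) = d \<and> T = rat_eval p q)"

definition iterates_normal_on :: "(sphere \<Rightarrow> sphere) \<Rightarrow> sphere set \<Rightarrow> bool" where
  "iterates_normal_on T V \<longleftrightarrow>
     (\<forall>\<sigma> :: nat \<Rightarrow> nat. \<exists>(\<phi> :: nat \<Rightarrow> nat) (g :: sphere \<Rightarrow> sphere). strict_mono \<phi> \<and>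
        (\<forall>x\<in>V. \<exists>\<epsilon>>0. sball x \<epsilon> \<subseteq> V \<and>
           (\<forall>e>0. \<exists>N. \<forall>k\<ge>N. \<forall>y\<in>sball x \<epsilon>. chordal ((T ^^ \<sigma> (\<phi> k)) y) (g y) < e)))"

definition fatou_set :: "(sphere \<Rightarrow> sphere) \<Rightarrow> sphere set" where
  "fatou_set T = {x. \<exists>r>0. iterates_normal_on T (sball x r)}"

definition julia_set :: "(sphere \<Rightarrow> sphere) \<Rightarrow> sphere set" where
  "julia_set T = - fatou_set T"

text \<open>Critical points: points at which T is not locally injective (local degree > 1).\<close>
definition crit :: "(sphere \<Rightarrow> sphere) \<Rightarrow> sphere set" where
  "crit T = {c. \<forall>r>0. \<not> inj_on T (sball c r)}"

definition postcritical :: "(sphere \<Rightarrow> sphere) \<Rightarrow> sphere set" where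
  "postcritical T = sclosure (\<Union>n\<in>{1..}. (T ^^ n) ` crit T)"

definition sph_holomorphic_on :: "(complex \<Rightarrow> sphere) \<Rightarrow> complex set \<Rightarrow> bool" where
  "sph_holomorphic_on f A \<longleftrightarrow> (\<forall>z\<in>A. \<exists>r>0. \<exists>g.
      g holomorphic_on ball z r \<and>
      ((\<forall>w\<in>ball z r. f w = Some (g w)) \<or>
       (\<forall>w\<in>ball z r. (g w = 0 \<longrightarrow> f w = None) \<and> (g w \<noteq> 0 \<longrightarrow> f w = Some (1 / g w)))))"

definition orbital_set :: "(sphere \<Rightarrow> sphere) \<Rightarrow> complex set \<Rightarrow> sphere set" where
  "orbital_set T E = (\<Union>k. (T ^^ k) -` (Some ` E))"

definition bounded_in_plane :: "sphere set \<Rightarrow> bool" where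
  "bounded_in_plane A \<longleftrightarrow> None \<notin> A \<and> bounded {z. Some z \<in> A}"

text \<open>N_delta(A): minimal number of open sets of diameter at most delta covering A.
  (Boundedness is required explicitly since the library's diameter is 0 on unbounded sets.)\<close>
definition covnum :: "real \<Rightarrow> complex set \<Rightarrow> nat" where
  "covnum \<delta> A = Inf {card F | F. finite F \<and>
      (\<forall>V\<in>F. open V \<and> bounded V \<and> diameter V \<le> \<delta>) \<and> A \<subseteq> \<Union>F}"

text \<open>|S'(E)| = max over E of |S'|, for a sphere-valued map finite on E.\<close>
definition deriv_max :: "(complex \<Rightarrow> sphere) \<Rightarrow> complex set \<Rightarrow> real" where
  "deriv_max S E = (SUP z\<in>E. cmod (deriv (\<lambda>w. the (S w)) z))"

end

theory Submission
  imports Defs "HOL-Complex_Analysis.Complex_Analysis"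
begin


lemma omit_small:
  assumes holh: "h holomorphic_on ball 0 1" and injh: "inj_on h (ball 0 1)"
    and h0: "h 0 = 0" and dh0: "deriv h 0 = 1"
  shows "\<exists>a. norm a < 2 \<and> a \<notin> h ` ball 0 1"
proof (rule ccontr)
  assume "\<not> ?thesis"
  then have sub: "ball 0 2 \<subseteq> h ` ball 0 1" by auto
  obtain \<phi> where holp: "\<phi> holomorphic_on (h ` ball 0 1)"
    and dd: "\<And>z. z \<in> ball 0 1 \<Longrightarrow> deriv h z * deriv \<phi> (h z) = 1"
    and inv: "\<And>z. z \<in> ball 0 1 \<Longrightarrow> \<phi> (h z) = z"
    using holomorphic_has_inverse[OF holh _ injh] by auto
  have holp2: "\<phi> holomorphic_on ball 0 2" using holp sub holomorphic_on_subset by blast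
  have dp0: "deriv \<phi> 0 = 1" using dd[of 0] dh0 h0 by simp
  have Dp: "(\<phi> has_field_derivative 1) (at 0)"
    using holomorphic_derivI[OF holp2 open_ball, of 0] dp0 by simp
  define \<psi> where "\<psi> = (\<lambda>w. \<phi> (2 * w))"
  have hol\<psi>: "\<psi> holomorphic_on ball 0 1"
    unfolding \<psi>_def
    using holomorphic_on_compose_gen[of "\<lambda>w. 2*w" "ball 0 1" \<phi> "ball 0 2"] holp2
    by (simp add: o_def image_subset_iff norm_mult)
  have "(\<psi> has_field_derivative 1 * 2) (at 0)"
    unfolding \<psi>_def
  proof (rule DERIV_chain2[where g="\<lambda>w. 2*w"])
    show "(\<phi> has_field_derivative 1) (at (2 * 0))" using Dp by simp
    show "((\<lambda>w. 2 * w) has_field_derivative 2) (at (0::complex))"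
      by (auto intro!: derivative_eq_intros)
  qed
  then have d\<psi>: "deriv \<psi> 0 = 2" by (simp add: DERIV_imp_deriv)
  have \<psi>0: "\<psi> 0 = 0" unfolding \<psi>_def using inv[of 0] h0 by simp
  have "norm (\<psi> z) < 1" if "norm z < 1" for z
  proof -
    have "2 * z \<in> ball 0 2" using that by (simp add: norm_mult)
    then obtain w where w: "w \<in> ball 0 1" "2 * z = h w" using sub by blast
    then show ?thesis unfolding \<psi>_def using inv[OF w(1)] by simp
  qed
  then have "norm (deriv \<psi> 0) \<le> 1"
    using Schwarz_Lemma(2)[OF hol\<psi> \<psi>0, of 0] by auto
  then show False using d\<psi> by simp
qed

lemma growth:
  obtains B0 :: real where "B0 > 0" and "\<And>h z. h holomorphic_on ball 0 1 \<Longrightarrow> inj_on h (ball 0 1) \<Longrightarrow>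
     h 0 = 0 \<Longrightarrow> deriv h 0 = 1 \<Longrightarrow> norm z \<le> 1/4 \<Longrightarrow> norm (h z) \<le> B0"
proof -
  define BS :: real where "BS = exp(pi * exp(pi * (2 + 2 * 1 + 12 * (1/2) / (1 - 1/2))))"
  have BS0: "BS > 0" unfolding BS_def by simp
  have main: "norm (h z) \<le> 2 * (1 + BS^2)" if holh: "h holomorphic_on ball 0 1" and injh: "inj_on h (ball 0 1)"
     and h0: "h 0 = 0" and dh0: "deriv h 0 = 1" and z: "norm z \<le> 1/4" for h z
  proof -
    obtain a where a2: "norm a < 2" and anot: "a \<notin> h ` ball 0 1"
      using omit_small[OF holh injh h0 dh0] by blast
    have a0: "a \<noteq> 0" using anot h0 by force
    have "(\<lambda>w. h w - a) holomorphic_on ball 0 1" by (intro holomorphic_intros holh)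
    moreover have "contractible (ball (0::complex) 1)" by (simp add: convex_imp_contractible)
    moreover have "\<And>w. w \<in> ball 0 1 \<Longrightarrow> h w - a \<noteq> 0" using anot by force
    ultimately obtain k where holk: "k holomorphic_on ball 0 1"
        and hk: "\<And>w. w \<in> ball 0 1 \<Longrightarrow> h w - a = k w ^ 2"
      using contractible_imp_holomorphic_sqrt by blast
    have k0sq: "k 0 ^ 2 = - a" using hk[of 0] h0 by simp
    then have k00: "k 0 \<noteq> 0" using a0 by auto
    have knz: "k w \<noteq> 0" if "w \<in> ball 0 1" for w
      using hk[OF that] anot that by force
    define F where "F = (\<lambda>w. - k (w/2) / k 0)"
    have holF: "F holomorphic_on cball 0 1"
      unfolding F_def
    proof (intro holomorphic_intros)
      have "(\<lambda>w. w/2) holomorphic_on cball (0::complex) 1" by (intro holomorphic_intros) simp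
      moreover have "(\<lambda>w. w/2) ` cball (0::complex) 1 \<subseteq> ball 0 1"
        by (auto simp: norm_divide)
      ultimately show "(\<lambda>w. k (w / 2)) holomorphic_on cball 0 1"
        using holomorphic_on_compose_gen[of "\<lambda>w. w/2" "cball 0 1" k "ball 0 1"] holk
        by (simp add: o_def)
    qed (use k00 in auto)
    have F0: "norm (F 0) \<le> 1" unfolding F_def using k00 by simp
    have not01: "\<not> (F w = 0 \<or> F w = 1)" if "w \<in> cball 0 1" for w
    proof -
      have w2: "w/2 \<in> ball 0 1" using that by (simp add: norm_divide)
      have "F w \<noteq> 0" unfolding F_def using knz[OF w2] k00 by simp
      moreover have "F w \<noteq> 1"
      proof
        assume "F w = 1"
        then have e: "k (w/2) = - k 0" unfolding F_def using k00 by (simp add: field_simps) (metis minus_minus)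
        then have "h (w/2) - a = h 0 - a" using hk[OF w2] hk[of 0] by simp
        then have "h (w/2) = h 0" by simp
        then have "w/2 = 0" using injh w2 by (auto dest: inj_onD)
        then show False using e k00 by simp
      qed
      ultimately show ?thesis by blast
    qed
    have "norm (F (2*z)) \<le> BS"
      unfolding BS_def
      by (rule Schottky[OF holF F0 not01]) (use z in \<open>auto simp: norm_mult\<close>)
    then have "norm (k z) / norm (k 0) \<le> BS" unfolding F_def by (simp add: norm_divide)
    then have nk: "norm (k z) \<le> norm (k 0) * BS" using k00 by (simp add: field_simps)
    have zb: "z \<in> ball 0 1" using z by simp
    have "norm (h z) = norm (a + k z ^ 2)" using hk[OF zb] by (simp add: algebra_simps)
    also have "\<dots> \<le> norm a + norm (k z) ^ 2" by (metis norm_power norm_triangle_ineq)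
    also have "\<dots> \<le> norm a + (norm (k 0) * BS) ^ 2"
      using nk by (intro add_left_mono power_mono) auto
    also have "\<dots> = norm a * (1 + BS^2)"
    proof -
      have "norm (k 0) ^ 2 = norm a" using k0sq by (metis norm_minus_cancel norm_power)
      then show ?thesis by (simp add: power_mult_distrib algebra_simps)
    qed
    also have "\<dots> \<le> 2 * (1 + BS^2)" using a2 by (intro mult_right_mono) auto
    finally show ?thesis .
  qed
  show ?thesis
    by (rule that[of "2 * (1 + BS^2)"]) (use main in \<open>auto simp: add_pos_nonneg\<close>)
qed




lemma scaled_est:
  fixes g :: "complex \<Rightarrow> complex" and x y :: complex and \<rho> :: real
  assumes Bz: "\<And>h z. h holomorphic_on ball 0 1 \<Longrightarrow> inj_on h (ball 0 1) \<Longrightarrow>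
     h 0 = 0 \<Longrightarrow> deriv h 0 = 1 \<Longrightarrow> norm z \<le> 1/4 \<Longrightarrow> norm (h z) \<le> Bz"
    and U: "open U" and holg: "g holomorphic_on U" and injg: "inj_on g U"
    and \<rho>: "\<rho> > 0" and sub: "ball x \<rho> \<subseteq> U" and y: "norm (y - x) \<le> \<rho>/8"
  shows "norm (g y - g x) \<le> Bz * \<rho> * norm (deriv g x)"
    and "norm (deriv g y) \<le> 8 * Bz * norm (deriv g x)"
proof -
  have xU: "x \<in> U" using sub \<rho> by auto
  define c where "c = deriv g x"
  have c0: "c \<noteq> 0" unfolding c_def using holomorphic_injective_imp_regular[OF holg U injg xU] .
  define h where "h = (\<lambda>w. (g (x + of_real \<rho> * w) - g x) / (of_real \<rho> * c))"
  have inb: "x + of_real \<rho> * w \<in> ball x \<rho>" if "w \<in> ball 0 1" for w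
    using that \<rho> by (simp add: dist_norm norm_mult)
  have Dg: "(g has_field_derivative deriv g u) (at u)" if "u \<in> U" for u
    using holomorphic_derivI[OF holg U that] .
  have Dh: "(h has_field_derivative deriv g (x + of_real \<rho> * w) / c) (at w)" if "w \<in> ball 0 1" for w
  proof -
    have "((\<lambda>w. g (x + of_real \<rho> * w)) has_field_derivative deriv g (x + of_real \<rho> * w) * of_real \<rho>) (at w)"
    proof (rule DERIV_chain2[where g="\<lambda>w. x + of_real \<rho> * w"])
      show "(g has_field_derivative deriv g (x + of_real \<rho> * w)) (at (x + of_real \<rho> * w))"
        using Dg inb[OF that] sub by blast
      show "((\<lambda>w. x + of_real \<rho> * w) has_field_derivative of_real \<rho>) (at w)"
        by (auto intro!: derivative_eq_intros)
    qed
    then have "(h has_field_derivative (deriv g (x + of_real \<rho> * w) * of_real \<rho> - 0) / (of_real \<rho> * c)) (at w)"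
      unfolding h_def using \<rho> c0 by (intro derivative_eq_intros) auto
    then show ?thesis using \<rho> by (simp add: field_simps)
  qed
  have holh: "h holomorphic_on ball 0 1"
    using Dh holomorphic_on_open[of "ball 0 1" h] by blast
  have injh: "inj_on h (ball 0 1)"
  proof
    fix u v assume u: "u \<in> ball 0 1" and v: "v \<in> ball 0 1" and e: "h u = h v"
    then have "g (x + of_real \<rho> * u) = g (x + of_real \<rho> * v)" unfolding h_def using c0 \<rho> by (simp add: field_simps)
    then have "x + of_real \<rho> * u = x + of_real \<rho> * v" using injg inb[OF u] inb[OF v] sub by (meson inj_onD subsetD)
    then show "u = v" using \<rho> by simp
  qed
  have h0: "h 0 = 0" unfolding h_def by simp
  have dh: "deriv h w = deriv g (x + of_real \<rho> * w) / c" if "w \<in> ball 0 1" for w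
    using Dh[OF that] by (simp add: DERIV_imp_deriv)
  have dh0: "deriv h 0 = 1" using dh[of 0] c0 by (simp add: c_def)
  have hb: "norm (h z) \<le> Bz" if "norm z \<le> 1/4" for z
    using Bz[OF holh injh h0 dh0 that] .
  define w where "w = (y - x) / of_real \<rho>"
  have "norm w = norm (y - x) / \<rho>" unfolding w_def using \<rho> by (simp add: norm_divide)
  also have "\<dots> \<le> (\<rho>/8) / \<rho>" using y \<rho> by (intro divide_right_mono) auto
  also have "\<dots> = 1/8" using \<rho> by simp
  finally have nw: "norm w \<le> 1/8" .
  have yw: "y = x + of_real \<rho> * w" unfolding w_def using \<rho> by simp
  have "g y - g x = of_real \<rho> * c * h w" unfolding h_def yw using c0 \<rho> by simp
  then have "norm (g y - g x) = \<rho> * norm c * norm (h w)" using \<rho> by (simp add: norm_mult)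
  also have "\<dots> \<le> \<rho> * norm c * Bz" using hb[of w] nw \<rho> by (intro mult_left_mono) auto
  finally show "norm (g y - g x) \<le> Bz * \<rho> * norm (deriv g x)" by (simp add: c_def algebra_simps)
  have "norm ((deriv ^^ 1) h w) \<le> fact 1 * Bz / (1/8) ^ 1"
  proof (rule Cauchy_inequality)
    have nu: "norm u < 1" if "norm (w - u) \<le> 1/8" for u
    proof -
      have "norm u \<le> norm w + norm (w - u)" by (metis add.commute diff_add_cancel norm_triangle_ineq4 norm_minus_commute norm_triangle_ineq)
      then show ?thesis using that nw by linarith
    qed
    have "ball w (1/8) \<subseteq> ball 0 1" using nu by (auto simp: dist_norm)
    then show "h holomorphic_on ball w (1 / 8)" using holh holomorphic_on_subset by blast
    have "cball w (1/8) \<subseteq> ball 0 1" using nu by (auto simp: dist_norm)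
    then show "continuous_on (cball w (1 / 8)) h"
      using holomorphic_on_imp_continuous_on[OF holh] continuous_on_subset by blast
    show "\<And>u. norm (w - u) = 1/8 \<Longrightarrow> norm (h u) \<le> Bz"
    proof -
      fix u assume "norm (w - u) = 1/8"
      moreover have "norm u \<le> norm w + norm (w - u)" by (metis add.commute diff_add_cancel norm_triangle_ineq4 norm_minus_commute norm_triangle_ineq)
      ultimately have "norm u \<le> 1/4" using nw by linarith
      then show "norm (h u) \<le> Bz" using hb by blast
    qed
  qed simp
  then have "norm (deriv h w) \<le> 8 * Bz" by simp
  moreover have "deriv h w = deriv g y / c" using dh[of w] nw yw by simp
  ultimately have "norm (deriv g y) / norm c \<le> 8 * Bz" by (simp add: norm_divide)
  then show "norm (deriv g y) \<le> 8 * Bz * norm (deriv g x)" using c0 by (simp add: c_def field_simps)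
qed




lemma local_est:
  obtains B :: real where "B > 0" and "\<And>U g x \<rho> y. open U \<Longrightarrow> g holomorphic_on U \<Longrightarrow> inj_on g U \<Longrightarrow>
     \<rho> > 0 \<Longrightarrow> ball x \<rho> \<subseteq> U \<Longrightarrow> norm (y - x) \<le> \<rho>/16 \<Longrightarrow>
     norm (g y - g x) \<le> B * \<rho> * norm (deriv g x) \<and> norm (deriv g y) \<le> B * norm (deriv g x)
     \<and> norm (deriv g x) \<le> B * norm (deriv g y)"
proof -
  obtain B0 :: real where B0p: "B0 > 0" and B0: "\<And>h z. h holomorphic_on ball 0 1 \<Longrightarrow> inj_on h (ball 0 1) \<Longrightarrow>
     h 0 = 0 \<Longrightarrow> deriv h 0 = 1 \<Longrightarrow> norm z \<le> 1/4 \<Longrightarrow> norm (h z) \<le> B0"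
    using growth by blast
  show ?thesis
  proof (rule that[of "8 * B0"])
    show "8 * B0 > 0" using B0p by simp
    fix U and g :: "complex \<Rightarrow> complex" and x y :: complex and \<rho> :: real
    assume U: "open U" and holg: "g holomorphic_on U" and injg: "inj_on g U" and \<rho>: "\<rho> > 0"
      and sub: "ball x \<rho> \<subseteq> U" and y: "norm (y - x) \<le> \<rho>/16"
    have y8: "norm (y - x) \<le> \<rho>/8" using y \<rho> by simp
    have e1: "norm (g y - g x) \<le> B0 * \<rho> * norm (deriv g x)"
      using scaled_est(1)[where Bz=B0, OF _ U holg injg \<rho> sub y8] B0 by blast
    have e2: "norm (deriv g y) \<le> 8 * B0 * norm (deriv g x)"
      using scaled_est(2)[where Bz=B0, OF _ U holg injg \<rho> sub y8] B0 by blast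
    have sub2: "ball y (\<rho>/2) \<subseteq> U"
    proof
      fix u assume "u \<in> ball y (\<rho>/2)"
      then have "dist y u < \<rho>/2" by simp
      moreover have "dist x y \<le> \<rho>/16" using y by (simp add: dist_norm norm_minus_commute)
      ultimately have "dist x u < \<rho>" using dist_triangle[of x u y] \<rho> by linarith
      then show "u \<in> U" using sub by auto
    qed
    have x8: "norm (x - y) \<le> (\<rho>/2)/8" using y by (simp add: norm_minus_commute)
    have e3: "norm (deriv g x) \<le> 8 * B0 * norm (deriv g y)"
      using scaled_est(2)[where Bz=B0, OF _ U holg injg _ sub2 x8] B0 \<rho> by simp
    have "B0 * \<rho> * norm (deriv g x) \<le> 8 * B0 * \<rho> * norm (deriv g x)"
      using B0p \<rho> by (intro mult_right_mono) auto
    then show "norm (g y - g x) \<le> 8 * B0 * \<rho> * norm (deriv g x) \<and> norm (deriv g y) \<le> 8 * B0 * norm (deriv g x)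
     \<and> norm (deriv g x) \<le> 8 * B0 * norm (deriv g y)" using e1 e2 e3 by linarith
  qed
qed

definition relC :: "complex set \<Rightarrow> real \<Rightarrow> complex \<Rightarrow> complex \<Rightarrow> bool" where
  "relC U C x y \<longleftrightarrow> (\<forall>g. g holomorphic_on U \<longrightarrow> inj_on g U \<longrightarrow>
      norm (g x - g y) \<le> C * norm (deriv g y) \<and> norm (deriv g x) \<le> C * norm (deriv g y)
      \<and> norm (deriv g y) \<le> C * norm (deriv g x))"

definition relU :: "complex set \<Rightarrow> complex \<Rightarrow> complex \<Rightarrow> bool" where
  "relU U x y \<longleftrightarrow> (\<exists>C>0. relC U C x y)"

lemma relC_sym: assumes "relC U C x y" "C > 0" shows "relC U (C*C + C) y x"
proof -
  have C: "C > 0" by fact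
  have H: "\<And>g. g holomorphic_on U \<Longrightarrow> inj_on g U \<Longrightarrow>
      norm (g x - g y) \<le> C * norm (deriv g y) \<and> norm (deriv g x) \<le> C * norm (deriv g y)
      \<and> norm (deriv g y) \<le> C * norm (deriv g x)" using assms unfolding relC_def by blast
  show ?thesis unfolding relC_def
  proof (intro conjI allI impI)
    fix g :: "complex \<Rightarrow> complex" assume g: "g holomorphic_on U" "inj_on g U"
    note h = H[OF g]
    have a: "norm (deriv g x) \<ge> 0" "norm (deriv g y) \<ge> 0" by auto
    have "norm (g y - g x) = norm (g x - g y)" by (simp add: norm_minus_commute)
    also have "\<dots> \<le> C * norm (deriv g y)" using h by blast
    also have "\<dots> \<le> C * (C * norm (deriv g x))" using h C by (intro mult_left_mono) auto
    also have "\<dots> \<le> (C*C + C) * norm (deriv g x)" using C a by (simp add: algebra_simps)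
    finally show "norm (g y - g x) \<le> (C*C + C) * norm (deriv g x)" .
    have "norm (deriv g y) \<le> C * norm (deriv g x)" using h by blast
    also have "\<dots> \<le> (C*C + C) * norm (deriv g x)" using C a by (intro mult_right_mono) auto
    finally show "norm (deriv g y) \<le> (C*C + C) * norm (deriv g x)" .
    have "norm (deriv g x) \<le> C * norm (deriv g y)" using h by blast
    also have "\<dots> \<le> (C*C + C) * norm (deriv g y)" using C a by (intro mult_right_mono) auto
    finally show "norm (deriv g x) \<le> (C*C + C) * norm (deriv g y)" .
  qed
qed

lemma relC_trans: assumes "relC U C1 x y" "relC U C2 y z" "C1 > 0" "C2 > 0"
  shows "relC U (C1*C2 + C2) x z"
proof -
  have C1: "C1 > 0" and C2: "C2 > 0" by fact+
  have H1: "\<And>g. g holomorphic_on U \<Longrightarrow> inj_on g U \<Longrightarrow>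
      norm (g x - g y) \<le> C1 * norm (deriv g y) \<and> norm (deriv g x) \<le> C1 * norm (deriv g y)
      \<and> norm (deriv g y) \<le> C1 * norm (deriv g x)" using assms(1) unfolding relC_def by blast
  have H2: "\<And>g. g holomorphic_on U \<Longrightarrow> inj_on g U \<Longrightarrow>
      norm (g y - g z) \<le> C2 * norm (deriv g z) \<and> norm (deriv g y) \<le> C2 * norm (deriv g z)
      \<and> norm (deriv g z) \<le> C2 * norm (deriv g y)" using assms(2) unfolding relC_def by blast
  show ?thesis unfolding relC_def
  proof (intro conjI allI impI)
    fix g :: "complex \<Rightarrow> complex" assume g: "g holomorphic_on U" "inj_on g U"
    note h1 = H1[OF g] and h2 = H2[OF g]
    have a: "norm (deriv g x) \<ge> 0" "norm (deriv g y) \<ge> 0" "norm (deriv g z) \<ge> 0" by auto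
    have "norm (g x - g z) \<le> norm (g x - g y) + norm (g y - g z)" using norm_triangle_ineq[of "g x - g y" "g y - g z"] by simp
    also have "\<dots> \<le> C1 * (C2 * norm (deriv g z)) + C2 * norm (deriv g z)"
      using h1 h2 C1 by (smt (verit) mult_left_mono)
    also have "\<dots> = (C1*C2 + C2) * norm (deriv g z)" by (simp add: algebra_simps)
    finally show "norm (g x - g z) \<le> (C1*C2 + C2) * norm (deriv g z)" .
    have "norm (deriv g x) \<le> C1 * (C2 * norm (deriv g z))"
      using h1 h2 C1 by (smt (verit) mult_left_mono)
    also have "\<dots> \<le> (C1*C2 + C2) * norm (deriv g z)" using C2 a by (simp add: algebra_simps)
    finally show "norm (deriv g x) \<le> (C1*C2 + C2) * norm (deriv g z)" .
    have "norm (deriv g z) \<le> C2 * (C1 * norm (deriv g x))"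
      using h1 h2 C2 by (smt (verit) mult_left_mono)
    also have "\<dots> \<le> (C1*C2 + C2) * norm (deriv g x)" using C2 a by (simp add: algebra_simps)
    finally show "norm (deriv g z) \<le> (C1*C2 + C2) * norm (deriv g x)" .
  qed
qed

lemma relU_sym: "relU U x y \<Longrightarrow> relU U y x"
proof -
  assume "relU U x y"
  then obtain C where C: "C > 0" "relC U C x y" unfolding relU_def by blast
  have "C*C + C > 0" using C by (simp add: add_pos_pos)
  then show "relU U y x" unfolding relU_def using relC_sym[OF C(2) C(1)] by blast
qed

lemma relU_trans: "relU U x y \<Longrightarrow> relU U y z \<Longrightarrow> relU U x z"
proof -
  assume "relU U x y" "relU U y z"
  then obtain C1 C2 where C: "C1 > 0" "relC U C1 x y" "C2 > 0" "relC U C2 y z" unfolding relU_def by blast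
  have "C1*C2 + C2 > 0" using C by (simp add: add_pos_pos)
  then show "relU U x z" unfolding relU_def using relC_trans[OF C(2) C(4) C(1) C(3)] by blast
qed

lemma relC_local:
  assumes U: "open U" and x: "x \<in> U"
  obtains \<rho> C where "\<rho> > 0" "C > 0" "ball x \<rho> \<subseteq> U" "\<And>y. y \<in> ball x (\<rho>/16) \<Longrightarrow> relC U C y x"
proof -
  obtain B :: real where Bp: "B > 0" and B: "\<And>U g x \<rho> y. open U \<Longrightarrow> g holomorphic_on U \<Longrightarrow> inj_on g U \<Longrightarrow>
     \<rho> > 0 \<Longrightarrow> ball x \<rho> \<subseteq> U \<Longrightarrow> norm (y - x) \<le> \<rho>/16 \<Longrightarrow>
     norm (g y - g x) \<le> B * \<rho> * norm (deriv g x) \<and> norm (deriv g y) \<le> B * norm (deriv g x)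
     \<and> norm (deriv g x) \<le> B * norm (deriv g y)"
    using local_est by blast
  obtain \<rho> where \<rho>: "\<rho> > 0" and sub: "ball x \<rho> \<subseteq> U" using U x openE by blast
  show ?thesis
  proof (rule that[OF \<rho> _ sub])
    show "B * \<rho> + B > 0" using Bp \<rho> by (simp add: add_pos_pos)
    fix y assume "y \<in> ball x (\<rho>/16)"
    then have y: "norm (y - x) \<le> \<rho>/16" by (simp add: dist_norm norm_minus_commute)
    show "relC U (B * \<rho> + B) y x" unfolding relC_def
    proof (intro conjI allI impI)
      fix g :: "complex \<Rightarrow> complex" assume g: "g holomorphic_on U" "inj_on g U"
      note h = B[OF U g \<rho> sub y]
      have a: "norm (deriv g x) \<ge> 0" "norm (deriv g y) \<ge> 0" by auto
      show "norm (g y - g x) \<le> (B * \<rho> + B) * norm (deriv g x)"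
        using h Bp a by (smt (verit) mult_right_mono)
      show "norm (deriv g y) \<le> (B * \<rho> + B) * norm (deriv g x)"
        using h Bp \<rho> a by (smt (verit) mult_nonneg_nonneg mult_right_mono)
      show "norm (deriv g x) \<le> (B * \<rho> + B) * norm (deriv g y)"
        using h Bp \<rho> a by (smt (verit) mult_nonneg_nonneg mult_right_mono)
    qed
  qed
qed

lemma relC_local_ex:
  assumes U: "open U" and x: "x \<in> U"
  shows "\<exists>\<rho> C. \<rho> > 0 \<and> C > 0 \<and> ball x \<rho> \<subseteq> U \<and> (\<forall>y\<in>ball x (\<rho>/16). relC U C y x)"
proof -
  obtain \<rho> C where "\<rho> > 0" "C > 0" "ball x \<rho> \<subseteq> U" "\<And>y. y \<in> ball x (\<rho>/16) \<Longrightarrow> relC U C y x"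
    using relC_local[OF U x] by metis
  then show ?thesis by blast
qed

lemma relU_all:
  assumes U: "open U" "connected U" and x: "x \<in> U" and y: "y \<in> U"
  shows "relU U x y"
proof (rule connected_equivalence_relation[OF U(2) x y])
  show "\<And>x y. relU U x y \<Longrightarrow> x \<in> U \<Longrightarrow> y \<in> U \<Longrightarrow> relU U y x" by (rule relU_sym)
  show "\<And>x y z. relU U x y \<Longrightarrow> relU U y z \<Longrightarrow> x \<in> U \<Longrightarrow> y \<in> U \<Longrightarrow> z \<in> U \<Longrightarrow> relU U x z"
    by (rule relU_trans)
  fix a assume a: "a \<in> U"
  obtain \<rho> C where "\<rho> > 0" "C > 0" "ball a \<rho> \<subseteq> U" and R: "\<And>y. y \<in> ball a (\<rho>/16) \<Longrightarrow> relC U C y a"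
    using relC_local_ex[OF U(1) a] by auto
  have R': "relU U a y" if "y \<in> ball a (\<rho>/16)" for y
    using R[OF that] \<open>C > 0\<close> relU_sym unfolding relU_def by blast
  have "ball a (\<rho>/16) \<subseteq> U" using \<open>ball a \<rho> \<subseteq> U\<close> \<open>\<rho> > 0\<close> by auto
  with R' \<open>\<rho> > 0\<close> show "\<exists>T. openin (top_of_set U) T \<and> a \<in> T \<and> (\<forall>x\<in>T. relU U a x)"
    by (intro exI[of _ "ball a (\<rho>/16)"]) (auto intro!: open_subset)
qed

lemma uniform_rel:
  assumes U: "open U" "connected U" and E: "compact E" "E \<subseteq> U" and z0: "z0 \<in> U"
  obtains K where "K > 0" "\<And>y. y \<in> E \<Longrightarrow> relC U K y z0"
proof -
  have "\<forall>x\<in>E. \<exists>W K. open W \<and> x \<in> W \<and> K > 0 \<and> (\<forall>y\<in>W. relC U K y z0)"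
  proof
    fix x assume "x \<in> E"
    then have xU: "x \<in> U" using E by auto
    obtain \<rho> C where \<rho>: "\<rho> > 0" and C: "C > 0" and "ball x \<rho> \<subseteq> U" and R: "\<And>y. y \<in> ball x (\<rho>/16) \<Longrightarrow> relC U C y x"
      using relC_local_ex[OF U(1) xU] by auto
    obtain C' where C': "C' > 0" "relC U C' x z0" using relU_all[OF U xU z0] unfolding relU_def by blast
    show "\<exists>W K. open W \<and> x \<in> W \<and> K > 0 \<and> (\<forall>y\<in>W. relC U K y z0)"
    proof (intro exI conjI ballI)
      show "open (ball x (\<rho>/16))" by simp
      show "x \<in> ball x (\<rho>/16)" using \<rho> by simp
      show "C*C' + C' > 0" using C C' by (simp add: add_pos_pos)
      fix y assume "y \<in> ball x (\<rho>/16)"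
      then show "relC U (C*C' + C') y z0" using relC_trans[OF R C'(2) C C'(1)] by blast
    qed
  qed
  from bchoice[OF this] obtain W where "\<forall>x\<in>E. \<exists>K. open (W x) \<and> x \<in> W x \<and> K > 0 \<and> (\<forall>y\<in>W x. relC U K y z0)"
    by blast
  from bchoice[OF this] obtain K where W: "\<forall>x\<in>E. open (W x) \<and> x \<in> W x \<and> K x > 0 \<and> (\<forall>y\<in>W x. relC U (K x) y z0)"
    by blast
  have "E \<subseteq> \<Union>(W ` E)" using W by blast
  then obtain T where T: "T \<subseteq> W ` E" "finite T" "E \<subseteq> \<Union>T"
    using compactE[OF E(1), of "W ` E"] W by blast
  then obtain F where F: "F \<subseteq> E" "finite F" "T = W ` F" by (meson finite_subset_image)
  define K0 where "K0 = 1 + (\<Sum>x\<in>F. K x)"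
  have Kle: "K x \<le> K0" if "x \<in> F" for x
  proof -
    have "K x \<le> (\<Sum>x\<in>F. K x)"
    proof (rule member_le_sum[OF that])
      fix a assume "a \<in> F - {x}"
      then show "0 \<le> K a" using F W by (meson DiffD1 less_imp_le subsetD)
    qed (use F in auto)
    then show ?thesis unfolding K0_def by simp
  qed
  have K0p: "K0 > 0" unfolding K0_def using F W by (intro add_pos_nonneg sum_nonneg) (auto simp: less_imp_le)
  have mono: "relC U C2 y z0" if "relC U C1 y z0" "C1 \<le> C2" for C1 C2 y
  proof -
    show ?thesis using that(1) unfolding relC_def
    proof (intro allI impI)
      fix g :: "complex \<Rightarrow> complex" assume g: "g holomorphic_on U" "inj_on g U"
        and H: "\<forall>g. g holomorphic_on U \<longrightarrow> inj_on g U \<longrightarrow>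
      norm (g y - g z0) \<le> C1 * norm (deriv g z0) \<and> norm (deriv g y) \<le> C1 * norm (deriv g z0)
      \<and> norm (deriv g z0) \<le> C1 * norm (deriv g y)"
      have a: "C1 * norm (deriv g z0) \<le> C2 * norm (deriv g z0)" "C1 * norm (deriv g y) \<le> C2 * norm (deriv g y)"
        using that(2) by (auto intro: mult_right_mono)
      show "norm (g y - g z0) \<le> C2 * norm (deriv g z0) \<and> norm (deriv g y) \<le> C2 * norm (deriv g z0)
      \<and> norm (deriv g z0) \<le> C2 * norm (deriv g y)" using H g a by (meson order_trans)
    qed
  qed
  show ?thesis
  proof (rule that[OF K0p])
    fix y assume "y \<in> E"
    then obtain x where "x \<in> F" "y \<in> W x" using T F by blast
    then show "relC U K0 y z0" using W F Kle mono by blast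
  qed
qed




lemma lip_holo:
  assumes U: "open U" "connected U" and E: "compact E" "E \<subseteq> U" and z0: "z0 \<in> E"
  obtains L where "L > 0"
    "\<And>g z w. g holomorphic_on U \<Longrightarrow> inj_on g U \<Longrightarrow> z \<in> E \<Longrightarrow> w \<in> E \<Longrightarrow>
        norm (g z - g w) \<le> L * norm (deriv g z0) * norm (z - w)"
    "\<And>g y. g holomorphic_on U \<Longrightarrow> inj_on g U \<Longrightarrow> y \<in> E \<Longrightarrow>
        norm (deriv g z0) \<le> L * norm (deriv g y)"
proof -
  have z0U: "z0 \<in> U" using z0 E by auto
  obtain K where Kp: "K > 0" and K: "\<And>y. y \<in> E \<Longrightarrow> relC U K y z0"
    using uniform_rel[OF U E z0U] by blast
  obtain B :: real where Bp: "B > 0" and B: "\<And>U g x \<rho> y. open U \<Longrightarrow> g holomorphic_on U \<Longrightarrow> inj_on g U \<Longrightarrow>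
     \<rho> > 0 \<Longrightarrow> ball x \<rho> \<subseteq> U \<Longrightarrow> norm (y - x) \<le> \<rho>/16 \<Longrightarrow>
     norm (g y - g x) \<le> B * \<rho> * norm (deriv g x) \<and> norm (deriv g y) \<le> B * norm (deriv g x)
     \<and> norm (deriv g x) \<le> B * norm (deriv g y)"
    using local_est by blast
  obtain r where rp: "r > 0" and rsub: "(\<Union>x\<in>E. ball x r) \<subseteq> U"
    using compact_subset_open_imp_ball_epsilon_subset[OF E(1) U(1) E(2)] by blast
  define L where "L = 16 * B * K + 32 * K / r + K"
  have Lp: "L > 0" unfolding L_def using Bp Kp rp by (intro add_pos_pos) auto
  have KL: "K \<le> L" unfolding L_def using Bp Kp rp by (simp add: add_nonneg_nonneg)
  show ?thesis
  proof (rule that[OF Lp])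
    fix g :: "complex \<Rightarrow> complex" and y assume g: "g holomorphic_on U" "inj_on g U" and y: "y \<in> E"
    have "norm (deriv g z0) \<le> K * norm (deriv g y)" using K[OF y] g unfolding relC_def by blast
    also have "\<dots> \<le> L * norm (deriv g y)" using KL by (intro mult_right_mono) auto
    finally show "norm (deriv g z0) \<le> L * norm (deriv g y)" .
  next
    fix g :: "complex \<Rightarrow> complex" and z w assume g: "g holomorphic_on U" "inj_on g U" and z: "z \<in> E" and w: "w \<in> E"
    have Kz: "norm (g z - g z0) \<le> K * norm (deriv g z0)" "norm (deriv g z) \<le> K * norm (deriv g z0)"
      using K[OF z] g unfolding relC_def by blast+
    have Kw: "norm (g w - g z0) \<le> K * norm (deriv g z0)"
      using K[OF w] g unfolding relC_def by blast
    have a: "norm (deriv g z0) \<ge> 0" "norm (z - w) \<ge> 0" by auto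
    show "norm (g z - g w) \<le> L * norm (deriv g z0) * norm (z - w)"
    proof (cases "norm (z - w) \<le> r/16")
      case True
      show ?thesis
      proof (cases "z = w")
        case True then show ?thesis using Lp by simp
      next
        case False
        define \<rho> where "\<rho> = 16 * norm (w - z)"
        have \<rho>: "\<rho> > 0" unfolding \<rho>_def using False by simp
        have \<rho>r: "\<rho> \<le> r" unfolding \<rho>_def using True by (simp add: norm_minus_commute)
        have "ball z \<rho> \<subseteq> U" using rsub z \<rho>r by (meson UN_subset_iff order_trans subset_ball)
        then have "norm (g w - g z) \<le> B * \<rho> * norm (deriv g z)"
          using B[OF U(1) g \<rho>] unfolding \<rho>_def by auto
        also have "\<dots> \<le> B * \<rho> * (K * norm (deriv g z0))"
          using Kz(2) Bp \<rho> by (intro mult_left_mono) auto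
        also have "\<dots> = (16 * B * K) * norm (deriv g z0) * norm (z - w)"
          unfolding \<rho>_def by (simp add: norm_minus_commute algebra_simps)
        also have "\<dots> \<le> L * norm (deriv g z0) * norm (z - w)"
          unfolding L_def using a Kp rp
          by (intro mult_right_mono) (auto simp: add_nonneg_nonneg)
        finally show ?thesis by (simp add: norm_minus_commute)
      qed
    next
      case False
      have "norm (g z - g w) \<le> norm (g z - g z0) + norm (g w - g z0)"
        using norm_triangle_ineq4[of "g z - g z0" "g w - g z0"] by simp
      also have "\<dots> \<le> 2 * K * norm (deriv g z0)" using Kz Kw by simp
      also have "\<dots> \<le> (32 * K / r) * norm (deriv g z0) * norm (z - w)"
      proof -
        have "1 \<le> (16 / r) * norm (z - w)" using False rp by (simp add: field_simps)
        then have "2 * K * norm (deriv g z0) * 1 \<le> 2 * K * norm (deriv g z0) * ((16 / r) * norm (z - w))"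
          using Kp a by (intro mult_left_mono) auto
        then show ?thesis by (simp add: algebra_simps)
      qed
      also have "\<dots> \<le> L * norm (deriv g z0) * norm (z - w)"
        unfolding L_def using a Kp rp Bp
        by (intro mult_right_mono) (auto simp: add_nonneg_nonneg)
      finally show ?thesis .
    qed
  qed
qed

lemma lip_inv:
  assumes L: "\<And>z w. z \<in> E \<Longrightarrow> w \<in> E \<Longrightarrow> norm (g z - g w) \<le> L * norm (deriv g z0) * norm (z - w)"
    and L2: "\<And>y. y \<in> E \<Longrightarrow> norm (deriv g z0) \<le> L * norm (deriv g y)"
    and Lp: "L > 0"
    and nz: "\<And>y. y \<in> E \<Longrightarrow> g y \<noteq> 0"
    and y1: "y1 \<in> E" and ymin: "\<And>y. y \<in> E \<Longrightarrow> norm (g y1) \<le> norm (g y)"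
    and z: "z \<in> E" and w: "w \<in> E"
  shows "norm (1 / g z - 1 / g w) \<le> (L * L) * (norm (deriv g y1) / norm (g y1) ^ 2) * norm (z - w)"
proof -
  define m where "m = norm (g y1)"
  have m: "m > 0" unfolding m_def using nz[OF y1] by simp
  have mz: "m \<le> norm (g z)" and mw: "m \<le> norm (g w)" using ymin z w unfolding m_def by auto
  have "norm (1 / g z - 1 / g w) = norm (g w - g z) / (norm (g z) * norm (g w))"
    using nz[OF z] nz[OF w] by (simp add: field_simps norm_divide norm_mult)
  also have "\<dots> \<le> norm (g w - g z) / (m * m)"
  proof (rule divide_left_mono)
    show "m * m \<le> norm (g z) * norm (g w)" using m mz mw by (intro mult_mono) auto
    have "norm (g z) > 0" "norm (g w) > 0" using m mz mw by linarith+
    then show "0 < norm (g z) * norm (g w) * (m * m)" using m by simp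
  qed simp
  also have "\<dots> \<le> (L * norm (deriv g z0) * norm (z - w)) / (m * m)"
    using L[OF w z] m by (intro divide_right_mono) (auto simp: norm_minus_commute)
  also have "\<dots> \<le> (L * (L * norm (deriv g y1)) * norm (z - w)) / (m * m)"
    using L2[OF y1] Lp m by (intro divide_right_mono mult_right_mono mult_left_mono) auto
  also have "\<dots> = (L * L) * (norm (deriv g y1) / norm (g y1) ^ 2) * norm (z - w)"
    unfolding m_def by (simp add: power2_eq_square)
  finally show ?thesis .
qed




lemma ball_cover:
  fixes K :: real
  obtains m :: nat where "\<And>c \<delta>. \<delta> > 0 \<Longrightarrow> \<exists>G. finite G \<and> card G \<le> m \<and>
      (\<forall>V\<in>G. open V \<and> bounded V \<and> diameter V \<le> \<delta>) \<and> cball (c::complex) (K*\<delta>) \<subseteq> \<Union>G"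
proof -
  have cov: "cball (0::complex) K \<subseteq> \<Union>((\<lambda>a. ball a (1/2)) ` cball 0 K)"
  proof
    fix x :: complex assume "x \<in> cball 0 K"
    then show "x \<in> \<Union>((\<lambda>a. ball a (1/2)) ` cball 0 K)" by (intro UnionI[of "ball x (1/2)"]) auto
  qed
  have opn: "\<And>B. B \<in> (\<lambda>a. ball a (1/2)) ` cball (0::complex) K \<Longrightarrow> open B" by auto
  obtain T where T: "T \<subseteq> (\<lambda>a. ball a (1/2)) ` cball (0::complex) K" "finite T" "cball 0 K \<subseteq> \<Union>T"
    by (rule compactE[OF compact_cball cov opn]) blast
  then obtain A where A: "A \<subseteq> cball (0::complex) K" "finite A" "T = (\<lambda>a. ball a (1/2)) ` A"
    by (meson finite_subset_image)
  show ?thesis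
  proof (rule that[of "card A"])
    fix c :: complex and \<delta> :: real assume \<delta>: "\<delta> > 0"
    define G where "G = (\<lambda>a. ball (c + of_real \<delta> * a) (\<delta>/2)) ` A"
    have "finite G" unfolding G_def using A by simp
    moreover have "card G \<le> card A" unfolding G_def by (rule card_image_le[OF A(2)])
    moreover have "\<forall>V\<in>G. open V \<and> bounded V \<and> diameter V \<le> \<delta>"
      unfolding G_def using \<delta> by auto
    moreover have "cball c (K*\<delta>) \<subseteq> \<Union>G"
    proof
      fix y assume y: "y \<in> cball c (K*\<delta>)"
      define u where "u = (y - c) / of_real \<delta>"
      have "norm u = norm (y - c) / \<delta>" unfolding u_def using \<delta> by (simp add: norm_divide)
      also have "\<dots> \<le> (K * \<delta>) / \<delta>" using y \<delta> by (intro divide_right_mono) (auto simp: dist_norm norm_minus_commute)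
      also have "\<dots> = K" using \<delta> by simp
      finally have "u \<in> cball 0 K" by simp
      then obtain a where a: "a \<in> A" "u \<in> ball a (1/2)" using T A by blast
      have "dist (c + of_real \<delta> * a) y = \<delta> * dist a u"
      proof -
        have "y = c + of_real \<delta> * u" unfolding u_def using \<delta> by simp
        then have "c + of_real \<delta> * a - y = of_real \<delta> * (a - u)" by (simp add: algebra_simps)
        then show ?thesis using \<delta> by (simp add: dist_norm norm_mult)
      qed
      also have "\<dots> < \<delta> * (1/2)" using a \<delta> by (intro mult_strict_left_mono) auto
      finally have "y \<in> ball (c + of_real \<delta> * a) (\<delta>/2)" by simp
      then show "y \<in> \<Union>G" unfolding G_def using a by blast
    qed
    ultimately show "\<exists>G. finite G \<and> card G \<le> card A \<and>
      (\<forall>V\<in>G. open V \<and> bounded V \<and> diameter V \<le> \<delta>) \<and> cball c (K*\<delta>) \<subseteq> \<Union>G" by blast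
  qed
qed

lemma covnum_le:
  assumes "finite F" "\<forall>V\<in>F. open V \<and> bounded V \<and> diameter V \<le> \<delta>" "A \<subseteq> \<Union>F"
  shows "covnum \<delta> A \<le> card F"
  unfolding covnum_def by (rule cInf_lower) (use assms in auto)

lemma covnum_attained:
  assumes "compact A" "\<delta> > 0"
  obtains F where "finite F" "\<forall>V\<in>F. open V \<and> bounded V \<and> diameter V \<le> \<delta>" "A \<subseteq> \<Union>F"
    "card F = covnum \<delta> A"
proof -
  let ?N = "{card F | F. finite F \<and> (\<forall>V\<in>F. open V \<and> bounded V \<and> diameter V \<le> \<delta>) \<and> A \<subseteq> \<Union>F}"
  have cov: "A \<subseteq> \<Union>((\<lambda>x. ball x (\<delta>/2)) ` A)"
  proof
    fix x assume "x \<in> A"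
    then show "x \<in> \<Union>((\<lambda>x. ball x (\<delta>/2)) ` A)" using assms(2) by (intro UnionI[of "ball x (\<delta>/2)"]) auto
  qed
  have opn: "\<And>B. B \<in> (\<lambda>x. ball x (\<delta>/2)) ` A \<Longrightarrow> open B" by auto
  obtain T where T: "T \<subseteq> (\<lambda>x. ball x (\<delta>/2)) ` A" "finite T" "A \<subseteq> \<Union>T"
    by (rule compactE[OF assms(1) cov opn]) blast
  have TV: "\<forall>V\<in>T. open V \<and> bounded V \<and> diameter V \<le> \<delta>" using T(1) assms(2) by auto
  have "card T \<in> ?N" unfolding mem_Collect_eq
    by (rule exI[of _ T]) (use T TV in simp)
  then have "?N \<noteq> {}" by (metis empty_iff)
  then have "Inf ?N \<in> ?N" by (rule Inf_nat_def1)
  then obtain F where F: "Inf ?N = card F" "finite F" "\<forall>V\<in>F. open V \<and> bounded V \<and> diameter V \<le> \<delta>" "A \<subseteq> \<Union>F"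
    unfolding mem_Collect_eq by (elim exE conjE) blast
  show ?thesis by (rule that[OF F(2,3,4)]) (simp add: covnum_def F(1))
qed




lemma mobius_fun:
  fixes S :: "complex \<Rightarrow> sphere"
  assumes U: "open U" and hol: "sph_holomorphic_on S U" and inj: "inj_on S U"
    and omit: "\<forall>w\<in>U. S w \<noteq> Some b"
  shows "(\<lambda>w. case S w of None \<Rightarrow> 0 | Some v \<Rightarrow> 1/(v - b)) holomorphic_on U"
    and "inj_on (\<lambda>w. case S w of None \<Rightarrow> 0 | Some v \<Rightarrow> 1/(v - b)) U"
proof -
  define g where "g = (\<lambda>w. case S w of None \<Rightarrow> 0 | Some v \<Rightarrow> 1/(v - b))"
  have loc: "\<exists>r>0. \<exists>G. G holomorphic_on ball z r \<and> (\<forall>w\<in>ball z r. g w = G w)" if z: "z \<in> U" for z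
  proof -
    obtain r h where r: "r > 0" and holh: "h holomorphic_on ball z r"
      and cases: "(\<forall>w\<in>ball z r. S w = Some (h w)) \<or>
       (\<forall>w\<in>ball z r. (h w = 0 \<longrightarrow> S w = None) \<and> (h w \<noteq> 0 \<longrightarrow> S w = Some (1 / h w)))"
      using hol z unfolding sph_holomorphic_on_def by blast
    obtain r' where r': "r' > 0" "ball z r' \<subseteq> U" using U z openE by blast
    define r2 where "r2 = min r r'"
    have r2: "r2 > 0" unfolding r2_def using r r' by simp
    have sub1: "ball z r2 \<subseteq> ball z r" and sub2: "ball z r2 \<subseteq> U"
      unfolding r2_def using r' by auto
    have holh2: "h holomorphic_on ball z r2" using holh sub1 holomorphic_on_subset by blast
    from cases show ?thesis
    proof
      assume c1: "\<forall>w\<in>ball z r. S w = Some (h w)"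
      have nb: "h w - b \<noteq> 0" if "w \<in> ball z r2" for w
        using c1 omit sub1 sub2 that by force
      show ?thesis
      proof (intro exI conjI)
        show "r2 > 0" by fact
        show "(\<lambda>w. 1 / (h w - b)) holomorphic_on ball z r2"
          using nb by (intro holomorphic_intros holh2) auto
        show "\<forall>w\<in>ball z r2. g w = 1 / (h w - b)"
          using c1 sub1 unfolding g_def by auto
      qed
    next
      assume c2: "\<forall>w\<in>ball z r. (h w = 0 \<longrightarrow> S w = None) \<and> (h w \<noteq> 0 \<longrightarrow> S w = Some (1 / h w))"
      have nb: "1 - b * h w \<noteq> 0" if "w \<in> ball z r2" for w
      proof
        assume e: "1 - b * h w = 0"
        then have hw: "h w \<noteq> 0" by auto
        then have "1 / h w = b" using e by (simp add: field_simps)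
        then have "S w = Some b" using c2 sub1 that hw by auto
        then show False using omit sub2 that by auto
      qed
      show ?thesis
      proof (intro exI conjI)
        show "r2 > 0" by fact
        show "(\<lambda>w. h w / (1 - b * h w)) holomorphic_on ball z r2"
          using nb by (intro holomorphic_intros holh2) auto
        show "\<forall>w\<in>ball z r2. g w = h w / (1 - b * h w)"
        proof
          fix w assume w: "w \<in> ball z r2"
          show "g w = h w / (1 - b * h w)"
          proof (cases "h w = 0")
            case True
            then show ?thesis using c2 sub1 w unfolding g_def by auto
          next
            case False
            then have "S w = Some (1 / h w)" using c2 sub1 w by auto
            then have "g w = 1 / (1 / h w - b)" unfolding g_def by simp
            also have "\<dots> = h w / (1 - b * h w)" using False nb[OF w]
              by (simp add: field_simps)
            finally show ?thesis .
          qed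
        qed
      qed
    qed
  qed
  have "\<forall>z\<in>U. \<exists>f'. (g has_field_derivative f') (at z)"
  proof
    fix z assume z: "z \<in> U"
    obtain r G where r: "r > 0" and holG: "G holomorphic_on ball z r" and eq: "\<forall>w\<in>ball z r. g w = G w"
      using loc[OF z] by blast
    have "(G has_field_derivative deriv G z) (at z)"
      using holomorphic_derivI[OF holG open_ball] r by simp
    then have "(g has_field_derivative deriv G z) (at z)"
      by (rule has_field_derivative_transform_within_open[of _ _ _ "ball z r"]) (use r eq in auto)
    then show "\<exists>f'. (g has_field_derivative f') (at z)" by blast
  qed
  then show "(\<lambda>w. case S w of None \<Rightarrow> 0 | Some v \<Rightarrow> 1/(v - b)) holomorphic_on U"
    using holomorphic_on_open[OF U] unfolding g_def by blast
  show "inj_on (\<lambda>w. case S w of None \<Rightarrow> 0 | Some v \<Rightarrow> 1/(v - b)) U"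
  proof (rule inj_onI)
    fix w1 w2 assume w1: "w1 \<in> U" and w2: "w2 \<in> U"
      and e: "(case S w1 of None \<Rightarrow> 0 | Some v \<Rightarrow> 1/(v - b)) = (case S w2 of None \<Rightarrow> 0 | Some v \<Rightarrow> 1/(v - b))"
    have "S w1 = S w2"
    proof (cases "S w1")
      case None
      show ?thesis
      proof (cases "S w2")
        case (Some v2)
        then have "v2 \<noteq> b" using omit w2 by auto
        then show ?thesis using e None Some by simp
      qed (use None in simp)
    next
      case (Some v1)
      then have v1: "v1 \<noteq> b" using omit w1 by auto
      show ?thesis
      proof (cases "S w2")
        case None
        then show ?thesis using e Some v1 by simp
      next
        case (Some v2)
        then have "v2 \<noteq> b" using omit w2 by auto
        then have "v1 = v2" using e Some \<open>S w1 = Some v1\<close> v1 by simp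
        then show ?thesis using Some \<open>S w1 = Some v1\<close> by simp
      qed
    qed
    then show "w1 = w2" using inj w1 w2 by (auto dest: inj_onD)
  qed
qed

lemma deriv_rel:
  assumes U: "open U" and holg: "g holomorphic_on U" and y: "y \<in> U" and gy: "g y \<noteq> 0"
    and rel: "\<And>w. g w \<noteq> 0 \<Longrightarrow> f w = b + 1 / g w"
  shows "deriv f y = - deriv g y / (g y)^2"
proof -
  define V where "V = U \<inter> g -` (- {0})"
  have V: "open V" unfolding V_def
    using continuous_open_preimage[OF holomorphic_on_imp_continuous_on[OF holg] U, of "- {0}"] by auto
  have yV: "y \<in> V" unfolding V_def using y gy by auto
  have Dg: "(g has_field_derivative deriv g y) (at y)" using holomorphic_derivI[OF holg U y] .
  have "((\<lambda>w. b + 1 / g w) has_field_derivative - deriv g y / (g y)^2) (at y)"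
    using Dg gy by (auto intro!: derivative_eq_intros simp: power2_eq_square field_simps)
  then have "(f has_field_derivative - deriv g y / (g y)^2) (at y)"
    by (rule has_field_derivative_transform_within_open[OF _ V yV]) (auto simp: V_def rel)
  then show ?thesis by (rule DERIV_imp_deriv)
qed




theorem lemma3p7:
  fixes T :: "sphere \<Rightarrow> sphere" and d :: nat and E U :: "complex set"
    and S :: "nat \<Rightarrow> nat \<Rightarrow> complex \<Rightarrow> sphere"
  assumes rat: "rational_map_of_degree T d" and d2: "d \<ge> 2"
    and J_bdd: "bounded_in_plane (julia_set T)"
    and J_ne: "julia_set T \<noteq> UNIV"
    and E_ne: "E \<noteq> {}" and E_cpt: "compact E"
    and U_open: "open U" and U_sc: "simply_connected U" and EU: "E \<subseteq> U"
    and U_P: "\<forall>u\<in>U. Some u \<notin> postcritical T"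
    and U_J: "\<exists>u\<in>U. Some u \<in> julia_set T"
    and orb: "bounded_in_plane (orbital_set T E)"
    and S_holo: "\<And>n j. n \<ge> 1 \<Longrightarrow> j \<in> {1..d ^ n} \<Longrightarrow> sph_holomorphic_on (S n j) U"
    and S_inj: "\<And>n j. n \<ge> 1 \<Longrightarrow> j \<in> {1..d ^ n} \<Longrightarrow> inj_on (S n j) U"
    and S_inv: "\<And>n j w. n \<ge> 1 \<Longrightarrow> j \<in> {1..d ^ n} \<Longrightarrow> w \<in> U \<Longrightarrow>
                  (T ^^ n) (S n j w) = Some w"
    and S_distinct: "\<And>n w. n \<ge> 1 \<Longrightarrow> w \<in> U \<Longrightarrow> inj_on (\<lambda>j. S n j w) {1..d ^ n}"
    and S_all: "\<And>n w. n \<ge> 1 \<Longrightarrow> w \<in> U \<Longrightarrow>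
                  (T ^^ n) -` {Some w} = (\<lambda>j. S n j w) ` {1..d ^ n}"
  shows "\<exists>C>0. \<forall>n\<ge>1. \<forall>\<delta>\<in>{0<..<1}. \<forall>j\<in>{1..d ^ n}.
           real (covnum \<delta> ((\<lambda>z. the (S n j z)) ` E))
             \<le> C * real (covnum (\<delta> / deriv_max (S n j) E) E)"
proof -
  have Uc: "connected U" using U_sc simply_connected_imp_connected by blast
  obtain z0 where z0: "z0 \<in> E" using E_ne by blast
  obtain L where Lp: "L > 0"
    and Lip: "\<And>g z w. g holomorphic_on U \<Longrightarrow> inj_on g U \<Longrightarrow> z \<in> E \<Longrightarrow> w \<in> E \<Longrightarrow>
        norm (g z - g w) \<le> L * norm (deriv g z0) * norm (z - w)"
    and Ld: "\<And>g y. g holomorphic_on U \<Longrightarrow> inj_on g U \<Longrightarrow> y \<in> E \<Longrightarrow>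
        norm (deriv g z0) \<le> L * norm (deriv g y)"
    using lip_holo[OF U_open Uc E_cpt EU z0] by blast
  obtain m :: nat where m: "\<And>c \<delta>. \<delta> > 0 \<Longrightarrow> \<exists>G. finite G \<and> card G \<le> m \<and>
      (\<forall>V\<in>G. open V \<and> bounded V \<and> diameter V \<le> \<delta>) \<and> cball (c::complex) ((L*L)*\<delta>) \<subseteq> \<Union>G"
    using ball_cover[of "L*L"] by blast
  have fin: "S n j z \<noteq> None" if n: "n \<ge> 1" and j: "j \<in> {1..d ^ n}" and z: "z \<in> E" for n j z
  proof -
    have "(T ^^ n) (S n j z) = Some z" using S_inv[OF n j] z EU by auto
    then have "S n j z \<in> orbital_set T E" unfolding orbital_set_def using z by blast
    then show ?thesis using orb unfolding bounded_in_plane_def by metis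
  qed
  show ?thesis
  proof (intro exI[of _ "real m + 1"] conjI allI impI ballI)
    show "real m + 1 > 0" by simp
    fix n :: nat and \<delta> :: real and j :: nat
    assume n: "n \<ge> 1" and \<delta>: "\<delta> \<in> {0<..<1}" and j: "j \<in> {1..d ^ n}"
    have \<delta>p: "\<delta> > 0" using \<delta> by simp
    define f where "f = (\<lambda>z. the (S n j z))"
    have dn: "d ^ n \<ge> 2"
    proof -
      have "d ^ 1 \<le> d ^ n" using n d2 by (intro power_increasing) auto
      then show ?thesis using d2 by simp
    qed
    obtain j' where j': "j' \<in> {1..d ^ n}" "j' \<noteq> j"
    proof (cases "j = 1")
      case True then show ?thesis using that[of 2] dn by auto
    next
      case False then show ?thesis using that[of 1] dn by auto
    qed
    obtain b where b: "S n j' z0 = Some b" using fin[OF n j'(1) z0] by auto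
    have omit: "\<forall>w\<in>U. S n j w \<noteq> Some b"
    proof (intro ballI notI)
      fix w assume w: "w \<in> U" and e: "S n j w = Some b"
      have z0U: "z0 \<in> U" using z0 EU by auto
      have "Some w = (T ^^ n) (S n j w)" using S_inv[OF n j w] by simp
      also have "\<dots> = (T ^^ n) (S n j' z0)" using e b by simp
      also have "\<dots> = Some z0" using S_inv[OF n j'(1) z0U] .
      finally have "w = z0" by simp
      then have "S n j z0 = S n j' z0" using e b by simp
      then have "j = j'" using S_distinct[OF n z0U] j j'(1) by (auto dest: inj_onD)
      then show False using j'(2) by simp
    qed
    define g where "g = (\<lambda>w. case S n j w of None \<Rightarrow> 0 | Some v \<Rightarrow> 1/(v - b))"
    have holg: "g holomorphic_on U" and injg: "inj_on g U"
      using mobius_fun[OF U_open S_holo[OF n j] S_inj[OF n j] omit] unfolding g_def by blast+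
    have grel: "f w = b + 1 / g w" if "g w \<noteq> 0" for w
    proof (cases "S n j w")
      case None then show ?thesis using that unfolding g_def by simp
    next
      case (Some v)
      then have "g w = 1 / (v - b)" unfolding g_def by simp
      then have "v - b \<noteq> 0" using that by auto
      then show ?thesis using Some \<open>g w = 1 / (v - b)\<close> unfolding f_def by simp
    qed
    have gnz: "g z \<noteq> 0" if zE: "z \<in> E" for z
    proof -
      obtain v where v: "S n j z = Some v" using fin[OF n j zE] by auto
      have "v \<noteq> b" using omit v zE EU by auto
      then show ?thesis using v unfolding g_def by simp
    qed
    have fE: "f z = b + 1 / g z" if "z \<in> E" for z using grel gnz that by blast
    have fder: "deriv f y = - deriv g y / (g y)^2" if "y \<in> E" for y
      using deriv_rel[OF U_open holg _ gnz[OF that] grel] that EU by auto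
    have contg: "continuous_on E g"
      using holomorphic_on_imp_continuous_on[OF holg] EU continuous_on_subset by blast
    obtain y1 where y1: "y1 \<in> E" "\<forall>y\<in>E. norm (g y1) \<le> norm (g y)"
      using continuous_attains_inf[OF E_cpt E_ne, of "\<lambda>z. norm (g z)"] contg continuous_on_norm by blast
    have Mdef: "deriv_max (S n j) E = (SUP z\<in>E. cmod (deriv f z))"
      unfolding deriv_max_def f_def by simp
    have img: "(\<lambda>z. cmod (deriv f z)) ` E = (\<lambda>z. cmod (deriv g z) / cmod (g z) ^ 2) ` E"
      using fder by (auto simp: norm_divide norm_power intro!: image_cong)
    have contd: "continuous_on E (\<lambda>z. cmod (deriv g z) / cmod (g z) ^ 2)"
    proof -
      have "deriv g holomorphic_on U" using holomorphic_deriv[OF holg U_open] .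
      then have "continuous_on E (deriv g)"
        using holomorphic_on_imp_continuous_on EU continuous_on_subset by blast
      then show ?thesis using contg gnz by (intro continuous_intros) auto
    qed
    have bdd: "bdd_above ((\<lambda>z. cmod (deriv f z)) ` E)"
      unfolding img
      by (intro bounded_imp_bdd_above compact_imp_bounded compact_continuous_image[OF contd E_cpt])
    define M where "M = deriv_max (S n j) E"
    have y1M: "cmod (deriv f y1) \<le> M" unfolding M_def Mdef using bdd y1(1) by (rule cSUP_upper2) simp
    have df1: "cmod (deriv f y1) = cmod (deriv g y1) / cmod (g y1) ^ 2"
      using fder[OF y1(1)] by (simp add: norm_divide norm_power)
    have y1U: "y1 \<in> U" using y1 EU by auto
    have "deriv g y1 \<noteq> 0" using holomorphic_injective_imp_regular[OF holg U_open injg y1U] .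
    then have Mp: "M > 0" using y1M df1 gnz[OF y1(1)] by (smt (verit) divide_pos_pos norm_ge_zero zero_less_norm_iff zero_less_power)
    have flip: "norm (f z - f w) \<le> (L*L) * M * norm (z - w)" if z: "z \<in> E" and w: "w \<in> E" for z w
    proof -
      have "norm (f z - f w) = norm (1 / g z - 1 / g w)" using fE[OF z] fE[OF w] by simp
      also have "\<dots> \<le> (L * L) * (norm (deriv g y1) / norm (g y1) ^ 2) * norm (z - w)"
        by (rule lip_inv[OF _ _ Lp gnz y1(1) _ z w]) (use Lip[OF holg injg] Ld[OF holg injg] y1(2) in auto)
      also have "\<dots> \<le> (L * L) * M * norm (z - w)"
        using y1M df1 Lp by (intro mult_right_mono mult_left_mono) auto
      finally show ?thesis .
    qed
    define \<epsilon> where "\<epsilon> = \<delta> / M"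
    have \<epsilon>p: "\<epsilon> > 0" unfolding \<epsilon>_def using \<delta>p Mp by simp
    obtain F0 where F0: "finite F0" "\<forall>V\<in>F0. open V \<and> bounded V \<and> diameter V \<le> \<epsilon>" "E \<subseteq> \<Union>F0"
      "card F0 = covnum \<epsilon> E"
      using covnum_attained[OF E_cpt \<epsilon>p] by blast
    define xs where "xs = (\<lambda>V. SOME x. x \<in> V \<inter> E)"
    define P where "P = (\<lambda>c G. finite G \<and> card G \<le> m \<and>
      (\<forall>W\<in>G. open W \<and> bounded W \<and> diameter W \<le> \<delta>) \<and> cball (c::complex) ((L*L)*\<delta>) \<subseteq> \<Union>G)"
    define Gs where "Gs = (\<lambda>V. if V \<inter> E = {} then {} else (SOME G. P (f (xs V)) G))"
    have GsP: "finite (Gs V) \<and> card (Gs V) \<le> m \<and> (\<forall>W\<in>Gs V. open W \<and> bounded W \<and> diameter W \<le> \<delta>)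
       \<and> (V \<inter> E \<noteq> {} \<longrightarrow> cball (f (xs V)) ((L*L)*\<delta>) \<subseteq> \<Union>(Gs V))" for V
    proof (cases "V \<inter> E = {}")
      case True then show ?thesis unfolding Gs_def by simp
    next
      case False
      have "\<exists>G. P (f (xs V)) G" unfolding P_def using m[OF \<delta>p] by blast
      then have PP: "P (f (xs V)) (SOME G. P (f (xs V)) G)" by (rule someI_ex)
      have GV: "Gs V = (SOME G. P (f (xs V)) G)" unfolding Gs_def using False by (simp only: if_False)
      show ?thesis unfolding GV using PP False unfolding P_def by blast
    qed
    define F' where "F' = \<Union>(Gs ` F0)"
    have finF': "finite F'" unfolding F'_def
    proof (rule finite_Union)
      show "finite (Gs ` F0)" using F0(1) by simp
      show "\<And>M. M \<in> Gs ` F0 \<Longrightarrow> finite M" using GsP by auto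
    qed
    have propF': "\<forall>W\<in>F'. open W \<and> bounded W \<and> diameter W \<le> \<delta>"
    proof
      fix W assume "W \<in> F'"
      then obtain V where "V \<in> F0" "W \<in> Gs V" unfolding F'_def by blast
      then show "open W \<and> bounded W \<and> diameter W \<le> \<delta>" using GsP[of V] by blast
    qed
    have cardF': "card F' \<le> m * card F0"
    proof -
      have "card F' \<le> (\<Sum>V\<in>F0. card (Gs V))" unfolding F'_def by (rule card_UN_le[OF F0(1)])
      also have "\<dots> \<le> of_nat (card F0) * m"
        by (rule sum_bounded_above) (use GsP in blast)
      finally show ?thesis by (simp add: mult.commute)
    qed
    have covF': "f ` E \<subseteq> \<Union>F'"
    proof
      fix u assume "u \<in> f ` E"
      then obtain z where z: "z \<in> E" "u = f z" by blast
      then obtain V where V: "V \<in> F0" "z \<in> V" using F0(3) by blast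
      then have ne: "V \<inter> E \<noteq> {}" using z by blast
      then have xV: "xs V \<in> V \<inter> E" unfolding xs_def by (metis ex_in_conv someI_ex)
      have "dist z (xs V) \<le> diameter V"
        using diameter_bounded_bound[of V z "xs V"] F0(2) V xV by blast
      also have "\<dots> \<le> \<epsilon>" using F0(2) V by blast
      finally have dz: "norm (z - xs V) \<le> \<epsilon>" by (simp add: dist_norm)
      have "norm (f z - f (xs V)) \<le> (L*L) * M * norm (z - xs V)" using flip z xV by blast
      also have "\<dots> \<le> (L*L) * M * \<epsilon>" using dz Lp Mp by (intro mult_left_mono) auto
      also have "\<dots> = (L*L) * \<delta>" unfolding \<epsilon>_def using Mp by simp
      finally have "u \<in> cball (f (xs V)) ((L*L)*\<delta>)" using z by (simp add: dist_norm norm_minus_commute)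
      then show "u \<in> \<Union>F'" using GsP[of V] ne V unfolding F'_def by blast
    qed
    have "covnum \<delta> (f ` E) \<le> card F'" by (rule covnum_le[OF finF' propF' covF'])
    also have "\<dots> \<le> m * covnum \<epsilon> E" using cardF' F0(4) by simp
    finally have "real (covnum \<delta> (f ` E)) \<le> real m * real (covnum \<epsilon> E)" by (simp flip: of_nat_mult)
    also have "\<dots> \<le> (real m + 1) * real (covnum \<epsilon> E)" by (intro mult_right_mono) auto
    finally show "real (covnum \<delta> ((\<lambda>z. the (S n j z)) ` E))
             \<le> (real m + 1) * real (covnum (\<delta> / deriv_max (S n j) E) E)"
      unfolding f_def \<epsilon>_def M_def .
  qed
qed



end
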